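(* Let $m\ge 2$ and $a_1,a_2$ integers coprime to $m$, and let $G=\langle x_1,x_2\mid c_{12}^m,\ \overline{c_{12}^{(x_1)}}\,c_{12}^{a_1},\ \overline{c_{12}^{(x_2)}}\,c_{12}^{a_2}\rangle$, whose commutator subgroup is cyclic of order $m$ generated by $c_{12}$. Then an element $z=x_1^{n_1}x_2^{n_2}c_{12}^{n_c}$ ($n_1,n_2,n_c\in\mathbb Z$) lies in the center of $G$ if and only if $$n_c(a_1-1)\equiv S_{n_2}(a_2)\pmod m,\qquad n_c(a_2-1)\equiv S_{-n_1}(a_1)\pmod m.$$
   Context: Notation: $\bar g=g^{-1}$, $c_{gh}=\bar g\,\bar h\,g\,h$, $c^{(g)}=\bar g\,c\,g$, $c_{12}=c_{x_1x_2}$. For an integer $a$ coprime to $m$, $a^{-1}$ denotes its inverse modulo $m$, and $S_n(a)=(a^n-1)/(a-1)$ understood modulo $m$ as $S_n(a)=\sum_{s=0}^{n-1}a^s$ for $n\ge0$ and $S_n(a)=-\sum_{s=1}^{|n|}a^{-s}$ for $n<0$ (so $S_n(1)=n$). *)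

theory Defs
  imports "HOL-Algebra.Algebra" "HOL-Number_Theory.Number_Theory"
begin

definition comm :: "('a, 'b) monoid_scheme \<Rightarrow> 'a \<Rightarrow> 'a \<Rightarrow> 'a" where
  "comm G g h = inv\<^bsub>G\<^esub> g \<otimes>\<^bsub>G\<^esub> inv\<^bsub>G\<^esub> h \<otimes>\<^bsub>G\<^esub> g \<otimes>\<^bsub>G\<^esub> h"

definition conjg :: "('a, 'b) monoid_scheme \<Rightarrow> 'a \<Rightarrow> 'a \<Rightarrow> 'a" where
  "conjg G c g = inv\<^bsub>G\<^esub> g \<otimes>\<^bsub>G\<^esub> c \<otimes>\<^bsub>G\<^esub> g"

definition rels :: "('a, 'b) monoid_scheme \<Rightarrow> int \<Rightarrow> int \<Rightarrow> int \<Rightarrow> 'a \<Rightarrow> 'a \<Rightarrow> bool" where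
  "rels H m a1 a2 y1 y2 \<longleftrightarrow>
     comm H y1 y2 [^]\<^bsub>H\<^esub> m = \<one>\<^bsub>H\<^esub> \<and>
     inv\<^bsub>H\<^esub> (conjg H (comm H y1 y2) y1) \<otimes>\<^bsub>H\<^esub> (comm H y1 y2 [^]\<^bsub>H\<^esub> a1) = \<one>\<^bsub>H\<^esub> \<and>
     inv\<^bsub>H\<^esub> (conjg H (comm H y1 y2) y2) \<otimes>\<^bsub>H\<^esub> (comm H y1 y2 [^]\<^bsub>H\<^esub> a2) = \<one>\<^bsub>H\<^esub>"

(* G is the group presented by <x1, x2 | relators>, with generators x1, x2:
   generated by x1, x2, the relators hold, and the universal property holds
   (for target groups on a countably infinite carrier type, which suffices since
   the presented group is countable). *)
definition presentation ::
  "('a, 'b) monoid_scheme \<Rightarrow> int \<Rightarrow> int \<Rightarrow> int \<Rightarrow> 'a \<Rightarrow> 'a \<Rightarrow> bool" where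
  "presentation G m a1 a2 x1 x2 \<longleftrightarrow>
     group G \<and> x1 \<in> carrier G \<and> x2 \<in> carrier G \<and>
     carrier G = generate G {x1, x2} \<and>
     rels G m a1 a2 x1 x2 \<and>
     (\<forall>(H :: int monoid) y1 y2. group H \<and> y1 \<in> carrier H \<and> y2 \<in> carrier H \<and>
        rels H m a1 a2 y1 y2 \<longrightarrow>
        (\<exists>\<phi> \<in> hom G H. \<phi> x1 = y1 \<and> \<phi> x2 = y2))"

definition group_center :: "('a, 'b) monoid_scheme \<Rightarrow> 'a set" where
  "group_center G = {z \<in> carrier G. \<forall>g \<in> carrier G. z \<otimes>\<^bsub>G\<^esub> g = g \<otimes>\<^bsub>G\<^esub> z}"

definition Ssum :: "int \<Rightarrow> int \<Rightarrow> int \<Rightarrow> int" where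
  "Ssum m a n = (if n \<ge> 0 then (\<Sum>s<nat n. a ^ s)
                 else - (\<Sum>s\<in>{1..nat (-n)}. (modular_inverse m a) ^ s))"

end

theory Submission
  imports Defs
begin


definition Pw :: "int \<Rightarrow> int \<Rightarrow> int \<Rightarrow> int" where
  "Pw m a n = (if n \<ge> 0 then a ^ nat n else (modular_inverse m a) ^ nat (-n))"

lemma Pw_0[simp]: "Pw m a 0 = 1" by (simp add: Pw_def)
lemma Ssum_0[simp]: "Ssum m a 0 = 0" by (simp add: Ssum_def)

lemma S_step: "Ssum m a (n+1) = Ssum m a n + Pw m a n"
proof (cases "n \<ge> 0")
  case True
  then have "nat (n+1) = Suc (nat n)" by simp
  then show ?thesis using True by (simp add: Ssum_def Pw_def)
next
  case False
  show ?thesis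
  proof (cases "n = -1")
    case True then show ?thesis by (simp add: Ssum_def Pw_def)
  next
    case F2: False
    then have "nat (-n) = Suc (nat (-(n+1)))" using False by simp
    moreover have "{1..Suc k} = insert (Suc k) {1..k}" for k :: nat by auto
    ultimately show ?thesis using False F2
      by (simp add: Ssum_def Pw_def)
  qed
qed

context
  fixes m a :: int
  assumes cop: "coprime a m"
begin

lemma ab: "m dvd a * modular_inverse m a - 1"
  using cong_modular_inverse1[OF cop] by (simp add: cong_iff_dvd_diff)

lemma P_up: "m dvd Pw m a (n+1) - a * Pw m a n"
proof (cases "n \<ge> 0")
  case True
  then have "nat (n+1) = Suc (nat n)" by simp
  then show ?thesis using True by (simp add: Pw_def)
next
  case False
  define b where "b = modular_inverse m a"
  have e: "nat (-n) = Suc (nat (-(n+1)))" using False by simp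
  have "Pw m a (n+1) - a * Pw m a n = (a*b - 1) * (- (b ^ nat (-(n+1))))"
    using False e by (simp add: Pw_def b_def algebra_simps)
  then show ?thesis using dvd_mult2[OF ab] by (simp add: b_def)
qed

lemma P_down: "m dvd Pw m a (n-1) - modular_inverse m a * Pw m a n"
proof (cases "n \<ge> 1")
  case True
  define b where "b = modular_inverse m a"
  then have e: "nat n = Suc (nat (n-1))" using True by simp
  have "Pw m a (n-1) - b * Pw m a n = (a*b - 1) * (- (a ^ nat (n-1)))"
    using True e by (simp add: Pw_def b_def algebra_simps)
  then show ?thesis using dvd_mult2[OF ab] by (simp add: b_def)
next
  case False
  then have "nat (-(n-1)) = Suc (nat (-n))" by simp
  then show ?thesis using False by (simp add: Pw_def)
qed

lemma P_add: "m dvd Pw m a (q+r) - Pw m a q * Pw m a r"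
proof (induction r rule: int_induct[where k=0])
  case base then show ?case by simp
next
  case (step1 r)
  have "Pw m a (q+(r+1)) - Pw m a q * Pw m a (r+1) =
     (Pw m a (q+r+1) - a * Pw m a (q+r)) + a * (Pw m a (q+r) - Pw m a q * Pw m a r)
     - Pw m a q * (Pw m a (r+1) - a * Pw m a r)"
    by (simp add: algebra_simps)
  then show ?case using step1(2) P_up[of "q+r"] P_up[of r]
    by (metis dvd_add dvd_diff dvd_mult)
next
  case (step2 r)
  define b where "b = modular_inverse m a"
  have "Pw m a (q+(r-1)) - Pw m a q * Pw m a (r-1) =
     (Pw m a (q+r-1) - b * Pw m a (q+r)) + b * (Pw m a (q+r) - Pw m a q * Pw m a r)
     - Pw m a q * (Pw m a (r-1) - b * Pw m a r)"
    by (simp add: algebra_simps)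
  then show ?case using step2(2) P_down[of "q+r"] P_down[of r]
    by (metis b_def dvd_add dvd_diff dvd_mult)
qed

lemma S_add: "m dvd Ssum m a (q+r) - (Ssum m a q + Pw m a q * Ssum m a r)"
proof (induction r rule: int_induct[where k=0])
  case base then show ?case by simp
next
  case (step1 r)
  have "Ssum m a (q+(r+1)) - (Ssum m a q + Pw m a q * Ssum m a (r+1)) =
     (Ssum m a (q+r) - (Ssum m a q + Pw m a q * Ssum m a r)) + (Pw m a (q+r) - Pw m a q * Pw m a r)"
    using S_step[of m a "q+r"] S_step[of m a r] by (simp add: algebra_simps)
  then show ?case using step1(2) P_add[of q r]
    by (metis dvd_add)
next
  case (step2 r)
  have "Ssum m a (q+(r-1)) - (Ssum m a q + Pw m a q * Ssum m a (r-1)) =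
     (Ssum m a (q+r) - (Ssum m a q + Pw m a q * Ssum m a r)) - (Pw m a (q+(r-1)) - Pw m a q * Pw m a (r-1))"
    using S_step[of m a "q+r-1"] S_step[of m a "r-1"] by (simp add: algebra_simps)
  then show ?case using step2(2) P_add[of q "r-1"]
    by (metis dvd_diff)
qed

lemma S_geom: "m dvd (a-1) * Ssum m a n - (Pw m a n - 1)"
proof (induction n rule: int_induct[where k=0])
  case base then show ?case by simp
next
  case (step1 n)
  have "(a-1) * Ssum m a (n+1) - (Pw m a (n+1) - 1) =
     ((a-1) * Ssum m a n - (Pw m a n - 1)) - (Pw m a (n+1) - a * Pw m a n)"
    using S_step[of m a n] by (simp add: algebra_simps)
  then show ?case using step1(2) P_up[of n] by (metis dvd_diff)
next
  case (step2 n)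
  have "(a-1) * Ssum m a (n-1) - (Pw m a (n-1) - 1) =
     ((a-1) * Ssum m a n - (Pw m a n - 1)) + (Pw m a n - a * Pw m a (n-1))"
    using S_step[of m a "n-1"] by (simp add: algebra_simps)
  then show ?case using step2(2) P_up[of "n-1"] by (metis dvd_add diff_add_cancel)
qed

end

definition mulT :: "int \<Rightarrow> int \<Rightarrow> int \<Rightarrow> int\<times>int\<times>int \<Rightarrow> int\<times>int\<times>int \<Rightarrow> int\<times>int\<times>int" where
 "mulT m a1 a2 x y = (fst x + fst y, fst (snd x) + fst (snd y),
    ((Pw m a1 (fst y) * snd (snd x) - Ssum m a2 (fst (snd x)) * Ssum m a1 (fst y))
      * Pw m a2 (fst (snd y)) + snd (snd y)) mod m)"

lemma mulT_simp[simp]: "mulT m a1 a2 (p,n,k) (q,n',k') =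
  (p+q, n+n', ((Pw m a1 q * k - Ssum m a2 n * Ssum m a1 q) * Pw m a2 n' + k') mod m)"
  by (simp add: mulT_def)

lemma assocT:
  assumes c1: "coprime a1 m" and c2: "coprime a2 m"
  shows "mulT m a1 a2 (mulT m a1 a2 (p,n,k) (q,n',k')) (r,n'',k'') =
         mulT m a1 a2 (p,n,k) (mulT m a1 a2 (q,n',k') (r,n'',k''))"
proof -
  define k1 where "k1 = (Pw m a1 q * k - Ssum m a2 n * Ssum m a1 q) * Pw m a2 n' + k'"
  define k2 where "k2 = (Pw m a1 r * k' - Ssum m a2 n' * Ssum m a1 r) * Pw m a2 n'' + k''"
  define U1 where "U1 = (Pw m a1 r * k1 - Ssum m a2 (n+n') * Ssum m a1 r) * Pw m a2 n'' + k''"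
  define U2 where "U2 = (Pw m a1 (q+r) * k - Ssum m a2 n * Ssum m a1 (q+r)) * Pw m a2 (n'+n'') + k2"
  have e1: "[(Pw m a1 r * (k1 mod m) - Ssum m a2 (n+n') * Ssum m a1 r) * Pw m a2 n'' + k'' = U1] (mod m)"
    unfolding U1_def by (intro cong_add cong_mult cong_diff cong_refl) (simp add: cong_def)
  have e2: "[(Pw m a1 (q+r) * k - Ssum m a2 n * Ssum m a1 (q+r)) * Pw m a2 (n'+n'') + k2 mod m = U2] (mod m)"
    unfolding U2_def by (intro cong_add cong_refl) (simp add: cong_def)
  define D1 where "D1 = Pw m a1 (q+r) - Pw m a1 q * Pw m a1 r"
  define D2 where "D2 = Pw m a2 (n'+n'') - Pw m a2 n' * Pw m a2 n''"
  define D3 where "D3 = Ssum m a1 (q+r) - (Ssum m a1 r + Pw m a1 r * Ssum m a1 q)"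
  define D4 where "D4 = Ssum m a2 (n+n') - (Ssum m a2 n' + Pw m a2 n' * Ssum m a2 n)"
  have d1: "m dvd D1" unfolding D1_def by (rule P_add[OF c1])
  have d2: "m dvd D2" unfolding D2_def by (rule P_add[OF c2])
  have d3: "m dvd D3" unfolding D3_def using S_add[OF c1, of r q] by (simp add: add.commute)
  have d4: "m dvd D4" unfolding D4_def using S_add[OF c2, of n' n] by (simp add: add.commute)
  have "U1 - U2 = D1 * (- k * Pw m a2 (n'+n''))
      + D2 * (Ssum m a2 n * (Ssum m a1 r + Pw m a1 r * Ssum m a1 q) - k * Pw m a1 q * Pw m a1 r)
      + D3 * (Ssum m a2 n * Pw m a2 (n'+n'')) + D4 * (- Ssum m a1 r * Pw m a2 n'')"
    unfolding U1_def U2_def k1_def k2_def D1_def D2_def D3_def D4_def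
    by (simp add: algebra_simps)
  then have "m dvd U1 - U2" using d1 d2 d3 d4 by (simp add: dvd_add dvd_mult2)
  then have "[U1 = U2] (mod m)" by (simp add: cong_iff_dvd_diff)
  then have fin: "[(Pw m a1 r * (k1 mod m) - Ssum m a2 (n+n') * Ssum m a1 r) * Pw m a2 n'' + k'' =
     (Pw m a1 (q+r) * k - Ssum m a2 n * Ssum m a1 (q+r)) * Pw m a2 (n'+n'') + k2 mod m] (mod m)"
    using e1 e2 by (meson cong_sym cong_trans)
  show ?thesis using fin unfolding mulT_simp k1_def[symmetric] k2_def[symmetric] cong_def
    by (simp add: add.assoc)
qed

definition enc :: "int\<times>int\<times>int \<Rightarrow> int" where
  "enc t = int (prod_encode (int_encode (fst t), prod_encode (int_encode (fst (snd t)), int_encode (snd (snd t)))))"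
definition dec :: "int \<Rightarrow> int\<times>int\<times>int" where
  "dec z = (int_decode (fst (prod_decode (nat z))), int_decode (fst (prod_decode (snd (prod_decode (nat z))))),
            int_decode (snd (prod_decode (snd (prod_decode (nat z))))))"
lemma dec_enc[simp]: "dec (enc t) = t"
  by (simp add: enc_def dec_def)
lemma enc_inj[simp]: "enc s = enc t \<longleftrightarrow> s = t"
  by (metis dec_enc)

definition Hm :: "int \<Rightarrow> int \<Rightarrow> int \<Rightarrow> int monoid" where
  "Hm m a1 a2 = \<lparr>carrier = enc ` {t. 0 \<le> snd (snd t) \<and> snd (snd t) < m},
     monoid.mult = (\<lambda>x y. enc (mulT m a1 a2 (dec x) (dec y))), one = enc (0,0,0)\<rparr>"

lemma Hm_carrier: "carrier (Hm m a1 a2) = enc ` {t. 0 \<le> snd (snd t) \<and> snd (snd t) < m}"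
  by (simp add: Hm_def)
lemma Hm_mult[simp]: "enc s \<otimes>\<^bsub>Hm m a1 a2\<^esub> enc t = enc (mulT m a1 a2 s t)"
  by (simp add: Hm_def)
lemma Hm_one: "\<one>\<^bsub>Hm m a1 a2\<^esub> = enc (0,0,0)"
  by (simp add: Hm_def)
lemma Hm_mem[simp]: "enc (p,n,k) \<in> carrier (Hm m a1 a2) \<longleftrightarrow> 0 \<le> k \<and> k < m"
  by (auto simp: Hm_carrier image_iff)
lemma Hm_memE:
  assumes "x \<in> carrier (Hm m a1 a2)"
  obtains p n k where "x = enc (p,n,k)" "0 \<le> k" "k < m"
  using assms by (auto simp: Hm_carrier)

lemma Hm_group:
  assumes m2: "m \<ge> 2" and c1: "coprime a1 m" and c2: "coprime a2 m"
  shows "group (Hm m a1 a2)"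
proof (rule groupI)
  fix x y assume "x \<in> carrier (Hm m a1 a2)" "y \<in> carrier (Hm m a1 a2)"
  then show "x \<otimes>\<^bsub>Hm m a1 a2\<^esub> y \<in> carrier (Hm m a1 a2)"
    using m2 by (auto elim!: Hm_memE)
next
  show "\<one>\<^bsub>Hm m a1 a2\<^esub> \<in> carrier (Hm m a1 a2)" using m2 by (simp add: Hm_one)
next
  fix x y z assume "x \<in> carrier (Hm m a1 a2)" "y \<in> carrier (Hm m a1 a2)" "z \<in> carrier (Hm m a1 a2)"
  then show "x \<otimes>\<^bsub>Hm m a1 a2\<^esub> y \<otimes>\<^bsub>Hm m a1 a2\<^esub> z = x \<otimes>\<^bsub>Hm m a1 a2\<^esub> (y \<otimes>\<^bsub>Hm m a1 a2\<^esub> z)"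
    using assocT[OF c1 c2] by (auto elim!: Hm_memE simp del: mulT_simp)
next
  fix x assume "x \<in> carrier (Hm m a1 a2)"
  then show "\<one>\<^bsub>Hm m a1 a2\<^esub> \<otimes>\<^bsub>Hm m a1 a2\<^esub> x = x"
    by (auto elim!: Hm_memE simp: Hm_one)
next
  fix x assume "x \<in> carrier (Hm m a1 a2)"
  then obtain q n' k' where x: "x = enc (q,n',k')" "0 \<le> k'" "k' < m" by (auto elim!: Hm_memE)
  define ki where "ki = Pw m a1 (-q) * (Ssum m a2 (-n') * Ssum m a1 q - k' * Pw m a2 (-n'))"
  have i1: "m dvd 1 - Pw m a1 q * Pw m a1 (-q)" using P_add[OF c1, of q "-q"] by simp
  have i2: "m dvd 1 - Pw m a2 (-n') * Pw m a2 n'" using P_add[OF c2, of "-n'" n'] by simp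
  have "(Pw m a1 q * (ki mod m) - Ssum m a2 (-n') * Ssum m a1 q) * Pw m a2 n' + k'
       - ((Pw m a1 q * ki - Ssum m a2 (-n') * Ssum m a1 q) * Pw m a2 n' + k')
       = Pw m a1 q * Pw m a2 n' * (ki mod m - ki)" by (simp add: algebra_simps)
  moreover have "m dvd ki mod m - ki" using mod_eq_dvd_iff[of "ki mod m" m ki] by simp
  ultimately have h1: "m dvd (Pw m a1 q * (ki mod m) - Ssum m a2 (-n') * Ssum m a1 q) * Pw m a2 n' + k'
       - ((Pw m a1 q * ki - Ssum m a2 (-n') * Ssum m a1 q) * Pw m a2 n' + k')"
    by (metis dvd_mult)
  have "(Pw m a1 q * ki - Ssum m a2 (-n') * Ssum m a1 q) * Pw m a2 n' + k'
     = (1 - Pw m a1 q * Pw m a1 (-q)) * (- (Ssum m a2 (-n') * Ssum m a1 q - k' * Pw m a2 (-n')) * Pw m a2 n')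
       + k' * (1 - Pw m a2 (-n') * Pw m a2 n')"
    unfolding ki_def by (simp add: algebra_simps)
  then have h2: "m dvd (Pw m a1 q * ki - Ssum m a2 (-n') * Ssum m a1 q) * Pw m a2 n' + k'"
    using i1 i2 by (simp add: dvd_add dvd_mult2 dvd_mult)
  have "m dvd (Pw m a1 q * (ki mod m) - Ssum m a2 (-n') * Ssum m a1 q) * Pw m a2 n' + k'"
    using h1 h2 by (metis diff_add_cancel dvd_add)
  then have "enc (-q, -n', ki mod m) \<otimes>\<^bsub>Hm m a1 a2\<^esub> x = \<one>\<^bsub>Hm m a1 a2\<^esub>"
    using x by (simp add: Hm_one)
  moreover have "enc (-q, -n', ki mod m) \<in> carrier (Hm m a1 a2)" using m2 by simp
  ultimately show "\<exists>y\<in>carrier (Hm m a1 a2). y \<otimes>\<^bsub>Hm m a1 a2\<^esub> x = \<one>\<^bsub>Hm m a1 a2\<^esub>" by blast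
qed


lemma Pw_1[simp]: "Pw m a 1 = a" by (simp add: Pw_def)
lemma Pw_m1[simp]: "Pw m a (-1) = modular_inverse m a" by (simp add: Pw_def)
lemma Ssum_1[simp]: "Ssum m a 1 = 1" by (simp add: Ssum_def)
lemma Ssum_m1[simp]: "Ssum m a (-1) = - modular_inverse m a" by (simp add: Ssum_def)

context
  fixes m a1 a2 :: int
  assumes m2: "m \<ge> 2" and c1: "coprime a1 m" and c2: "coprime a2 m"
begin

interpretation H: group "Hm m a1 a2" by (rule Hm_group[OF m2 c1 c2])

lemma iy1: "inv\<^bsub>Hm m a1 a2\<^esub> (enc (1,0,0)) = enc (-1,0,0)"
  by (rule H.inv_equality) (use m2 in \<open>simp_all add: Hm_one\<close>)
lemma iy2: "inv\<^bsub>Hm m a1 a2\<^esub> (enc (0,1,0)) = enc (0,-1,0)"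
  by (rule H.inv_equality) (use m2 in \<open>simp_all add: Hm_one\<close>)

lemma cH: "comm (Hm m a1 a2) (enc (1,0,0)) (enc (0,1,0)) = enc (0,0,1)"
proof -
  have b0: "0 \<le> modular_inverse m a2" "modular_inverse m a2 < m"
    using m2 modular_inverse_int_nonneg modular_inverse_int_less by auto
  have "[(modular_inverse m a2) * a2 = 1] (mod m)"
    using cong_modular_inverse2[of a2 m] c2 by simp
  then have "(modular_inverse m a2 * a2) mod m = 1" using m2 by (simp add: cong_def)
  then show ?thesis unfolding comm_def iy1 iy2 using b0 by simp
qed

lemma powN: "enc (0,0,1) [^]\<^bsub>Hm m a1 a2\<^esub> (j::nat) = enc (0,0, int j mod m)"
proof (induction j)
  case 0 then show ?case by (simp add: Hm_one)
next
  case (Suc j) then show ?case by (simp add: mod_simps add.commute)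
qed

lemma powI: "enc (0,0,1) [^]\<^bsub>Hm m a1 a2\<^esub> (k::int) = enc (0,0, k mod m)"
proof (cases "k < 0")
  case True
  have "inv\<^bsub>Hm m a1 a2\<^esub> (enc (0,0, int (nat (-k)) mod m)) = enc (0,0,k mod m)"
    by (rule H.inv_equality) (use m2 True in \<open>simp_all add: Hm_one mod_simps\<close>)
  then show ?thesis using True by (simp add: int_pow_def2 powN)
next
  case False
  then show ?thesis by (simp add: int_pow_def2 powN)
qed

lemma relsH: "rels (Hm m a1 a2) m a1 a2 (enc (1,0,0)) (enc (0,1,0))"
proof -
  have 1: "conjg (Hm m a1 a2) (enc (0,0,1)) (enc (1,0,0)) = enc (0,0,1) [^]\<^bsub>Hm m a1 a2\<^esub> a1"
    unfolding conjg_def iy1 powI using m2 by simp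
  have 2: "conjg (Hm m a1 a2) (enc (0,0,1)) (enc (0,1,0)) = enc (0,0,1) [^]\<^bsub>Hm m a1 a2\<^esub> a2"
    unfolding conjg_def iy2 powI using m2 by simp
  have 3: "enc (0,0,1) \<in> carrier (Hm m a1 a2)" using m2 by simp
  show ?thesis unfolding rels_def cH 1 2 using 3
    by (simp add: powI Hm_one dvd_eq_mod_eq_0)
qed

lemma ordH: "enc (0,0,1) [^]\<^bsub>Hm m a1 a2\<^esub> (k::int) = \<one>\<^bsub>Hm m a1 a2\<^esub> \<Longrightarrow> m dvd k"
  by (simp add: powI Hm_one dvd_eq_mod_eq_0)

end




context group
begin

lemma cancel_r: "x \<in> carrier G \<Longrightarrow> w \<in> carrier G \<Longrightarrow> x \<otimes> (inv x \<otimes> w) = w"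
  by (simp add: m_assoc[symmetric])
lemma cancel_l: "x \<in> carrier G \<Longrightarrow> w \<in> carrier G \<Longrightarrow> inv x \<otimes> (x \<otimes> w) = w"
  by (simp add: m_assoc[symmetric])

lemma conj_hom: "x \<in> carrier G \<Longrightarrow> group_hom G G (\<lambda>g. inv x \<otimes> g \<otimes> x)"
  unfolding group_hom_def group_hom_axioms_def hom_def
  apply (intro conjI is_group CollectI ballI)
   apply (auto simp: Pi_def)[1]
  apply (simp add: m_assoc cancel_r)
  done

lemma conj_int_pow: "x \<in> carrier G \<Longrightarrow> c \<in> carrier G \<Longrightarrow>
   inv x \<otimes> c [^] (k::int) \<otimes> x = (inv x \<otimes> c \<otimes> x) [^] k"
  using group_hom.hom_int_pow[OF conj_hom] by blast

lemma pow_cong_m: "c \<in> carrier G \<Longrightarrow> c [^] (m::int) = \<one> \<Longrightarrow> m dvd i - j \<Longrightarrow> c [^] i = c [^] j"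
proof -
  assume c: "c \<in> carrier G" and cm: "c [^] m = \<one>" and d: "m dvd i - j"
  then obtain t where "i - j = m * t" by (auto elim: dvdE)
  then have "i = j + m * t" by simp
  then have "c [^] i = c [^] j \<otimes> (c [^] m) [^] t" using c by (simp add: int_pow_mult int_pow_pow)
  then show ?thesis using cm c by simp
qed

lemma conj_nat: "y \<in> carrier G \<Longrightarrow> c \<in> carrier G \<Longrightarrow> inv y \<otimes> c \<otimes> y = c [^] (a::int) \<Longrightarrow>
   inv (y [^] (k::nat)) \<otimes> c \<otimes> y [^] k = c [^] (a ^ k)"
proof (induction k)
  case 0 then show ?case by simp
next
  case (Suc k)
  have "inv (y [^] Suc k) \<otimes> c \<otimes> y [^] Suc k = inv y \<otimes> (inv (y [^] k) \<otimes> c \<otimes> y [^] k) \<otimes> y"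
    using Suc.prems by (simp add: inv_mult_group m_assoc)
  also have "\<dots> = inv y \<otimes> c [^] (a ^ k) \<otimes> y" using Suc by simp
  also have "\<dots> = (c [^] a) [^] (a ^ k)" using Suc.prems conj_int_pow by simp
  also have "\<dots> = c [^] (a ^ Suc k)" using Suc.prems by (simp add: int_pow_pow mult.commute)
  finally show ?case .
qed

lemma conj_Pw:
  assumes x: "x \<in> carrier G" and c: "c \<in> carrier G" and cm: "c [^] (m::int) = \<one>"
    and cop: "coprime a m" and r: "inv x \<otimes> c \<otimes> x = c [^] (a::int)"
  shows "inv (x [^] (n::int)) \<otimes> c \<otimes> x [^] n = c [^] Pw m a n"
proof (cases "n \<ge> 0")
  case True
  then have "x [^] n = x [^] nat n" by (simp add: pow_nat)
  then show ?thesis using conj_nat[OF x c r, of "nat n"] True by (simp add: Pw_def)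
next
  case False
  define b where "b = modular_inverse m a"
  have "inv x \<otimes> c [^] b \<otimes> x = c [^] (a * b)" using conj_int_pow[OF x c] r c by (simp add: int_pow_pow)
  also have "\<dots> = c [^] (1::int)"
    using pow_cong_m[OF c cm] ab[OF cop] b_def by simp
  finally have e: "inv x \<otimes> c [^] b \<otimes> x = c" using c by simp
  have "x \<otimes> (inv x \<otimes> c [^] b \<otimes> x) \<otimes> inv x = c [^] b" using x c by (simp add: m_assoc cancel_r)
  then have r2: "inv (inv x) \<otimes> c \<otimes> inv x = c [^] b" using e x by simp
  have "x [^] n = inv (x [^] nat (-n))" using False by (simp only: int_pow_def2) simp
  also have "\<dots> = inv x [^] nat (-n)" using x by (simp add: nat_pow_inv)
  finally have "x [^] n = inv x [^] nat (-n)" .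
  then show ?thesis using conj_nat[OF _ c r2, of "nat (-n)"] x False by (simp add: Pw_def b_def)
qed

lemma comm_Pw:
  assumes x: "x \<in> carrier G" and c: "c \<in> carrier G" and cm: "c [^] (m::int) = \<one>"
    and cop: "coprime a m" and r: "inv x \<otimes> c \<otimes> x = c [^] (a::int)"
  shows "c [^] (k::int) \<otimes> x [^] (n::int) = x [^] n \<otimes> c [^] (k * Pw m a n)"
proof -
  have "inv (x [^] n) \<otimes> c [^] k \<otimes> x [^] n = c [^] (Pw m a n * k)"
    using conj_int_pow[of "x [^] n" c k] conj_Pw[OF assms, of n] x c by (simp add: int_pow_pow)
  then have "x [^] n \<otimes> (inv (x [^] n) \<otimes> c [^] k \<otimes> x [^] n) = x [^] n \<otimes> c [^] (k * Pw m a n)"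
    by (simp add: mult.commute)
  then show ?thesis using x c by (simp add: m_assoc[symmetric])
qed

lemma comm_inv: "z \<in> carrier G \<Longrightarrow> h \<in> carrier G \<Longrightarrow> z \<otimes> h = h \<otimes> z \<Longrightarrow> z \<otimes> inv h = inv h \<otimes> z"
proof -
  assume a: "z \<in> carrier G" "h \<in> carrier G" "z \<otimes> h = h \<otimes> z"
  have "inv h \<otimes> z = inv h \<otimes> (z \<otimes> h) \<otimes> inv h" using a(1,2) by (simp add: m_assoc)
  also have "\<dots> = inv h \<otimes> (h \<otimes> z) \<otimes> inv h" using a by simp
  also have "\<dots> = z \<otimes> inv h" using a(1,2) by (simp add: m_assoc cancel_l)
  finally show ?thesis by simp
qed

end


lemma arith_final:
  fixes m a1 a2 n1 n2 nc :: int
  assumes c1: "coprime a1 m" and c2: "coprime a2 m"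
    and A: "m dvd nc * (a1 - 1) - Ssum m a2 n2"
  shows "m dvd Ssum m a1 n1 * Pw m a2 n2 + nc * (a2 - 1) \<longleftrightarrow>
         m dvd nc * (a2 - 1) - Ssum m a1 (-n1)"
proof -
  define S1 where "S1 = Ssum m a1 n1"
  define S1m where "S1m = Ssum m a1 (-n1)"
  define S2 where "S2 = Ssum m a2 n2"
  define P1 where "P1 = Pw m a1 n1"
  define P1m where "P1m = Pw m a1 (-n1)"
  define P2 where "P2 = Pw m a2 n2"
  have F1: "m dvd (a1-1) * S1 - (P1 - 1)" using S_geom[OF c1] S1_def P1_def by simp
  have F2: "m dvd (a2-1) * S2 - (P2 - 1)" using S_geom[OF c2] S2_def P2_def by simp
  have F3: "m dvd - (S1 + P1 * S1m)" using S_add[OF c1, of n1 "-n1"] S1_def P1_def S1m_def by simp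
  have F4: "m dvd 1 - P1 * P1m" using P_add[OF c1, of n1 "-n1"] P1_def P1m_def by simp
  have F5: "m dvd (a1-1) * S1m - (P1m - 1)" using S_geom[OF c1, of "-n1"] S1m_def P1m_def by simp
  have A': "m dvd nc * (a1 - 1) - S2" using A S2_def by simp
  show ?thesis unfolding S1_def[symmetric] S1m_def[symmetric] P2_def[symmetric]
  proof
    assume B: "m dvd S1 * P2 + nc * (a2 - 1)"
    have "P1 * P2 - 1 = (a1-1) * (S1 * P2 + nc * (a2 - 1)) - (a2-1) * (nc * (a1 - 1) - S2)
        - P2 * ((a1-1) * S1 - (P1 - 1)) - ((a2-1) * S2 - (P2 - 1))"
      by (simp add: algebra_simps)
    then have G: "m dvd P1 * P2 - 1" using B A' F1 F2
      by (metis dvd_diff dvd_mult)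
    have "nc * (a2 - 1) - S1m = (S1 * P2 + nc * (a2 - 1)) + (P1 * P2 - 1) * S1m + (- (S1 + P1 * S1m)) * P2"
      by (simp add: algebra_simps)
    then show "m dvd nc * (a2 - 1) - S1m" using B G F3
      by (metis dvd_add dvd_mult2)
  next
    assume T: "m dvd nc * (a2 - 1) - S1m"
    have "P1m - P2 = (a2-1) * (nc * (a1 - 1) - S2) - (a1-1) * (nc * (a2 - 1) - S1m)
        - ((a1-1) * S1m - (P1m - 1)) + ((a2-1) * S2 - (P2 - 1))"
      by (simp add: algebra_simps)
    then have G: "m dvd P1m - P2" using T A' F5 F2
      by (metis dvd_add dvd_diff dvd_mult)
    have "S1 * P2 + nc * (a2 - 1) = (nc * (a2 - 1) - S1m) + (1 - P1 * P1m) * S1m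
        + (- (S1 + P1 * S1m)) * (- P1m) - S1 * (P1m - P2)"
      by (simp add: algebra_simps)
    then show "m dvd S1 * P2 + nc * (a2 - 1)" using T G F3 F4
      by (metis dvd_add dvd_diff dvd_mult dvd_mult2)
  qed
qed

locale pres = group G for G (structure) +
  fixes x1 x2 :: 'a and m a1 a2 :: int
  assumes x1: "x1 \<in> carrier G" and x2: "x2 \<in> carrier G"
    and c1: "coprime a1 m" and c2: "coprime a2 m"
    and rl: "rels G m a1 a2 x1 x2"
    and gen: "carrier G = generate G {x1, x2}"
    and ordc: "\<And>k::int. comm G x1 x2 [^] k = \<one> \<Longrightarrow> m dvd k"
begin

abbreviation "cc \<equiv> comm G x1 x2"

lemma cc_carr[simp]: "cc \<in> carrier G"
  unfolding comm_def using x1 x2 by simp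

lemma R1: "cc [^] m = \<one>" using rl by (simp add: rels_def)

lemma inv_one_eq: "u \<in> carrier G \<Longrightarrow> v \<in> carrier G \<Longrightarrow> inv u \<otimes> v = \<one> \<Longrightarrow> u = v"
  using inv_equality[of "inv u" v] by (metis inv_closed inv_inv)

lemma R2: "inv x1 \<otimes> cc \<otimes> x1 = cc [^] a1"
  using rl inv_one_eq[of "conjg G cc x1" "cc [^] a1"] x1 unfolding rels_def conjg_def by simp
lemma R3: "inv x2 \<otimes> cc \<otimes> x2 = cc [^] a2"
  using rl inv_one_eq[of "conjg G cc x2" "cc [^] a2"] x2 unfolding rels_def conjg_def by simp

lemma K1: "cc [^] (k::int) \<otimes> x1 [^] (n::int) = x1 [^] n \<otimes> cc [^] (k * Pw m a1 n)"
  by (rule comm_Pw[OF x1 cc_carr R1 c1 R2])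
lemma K2: "cc [^] (k::int) \<otimes> x2 [^] (n::int) = x2 [^] n \<otimes> cc [^] (k * Pw m a2 n)"
  by (rule comm_Pw[OF x2 cc_carr R1 c2 R3])

lemma powc_eq: "cc [^] (i::int) = cc [^] j \<longleftrightarrow> m dvd i - j"
proof
  assume "cc [^] i = cc [^] j"
  then have "cc [^] (i - j) = \<one>" by (simp add: int_pow_diff)
  then show "m dvd i - j" by (rule ordc)
next
  assume "m dvd i - j" then show "cc [^] i = cc [^] j" by (rule pow_cong_m[OF cc_carr R1])
qed

lemma rel12: "x1 \<otimes> x2 = x2 \<otimes> x1 \<otimes> cc"
  unfolding comm_def using x1 x2 by (simp add: m_assoc cancel_r)

lemma rel21: "x2 \<otimes> x1 = x1 \<otimes> x2 \<otimes> cc [^] (-1::int)"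
proof -
  have "x1 \<otimes> x2 \<otimes> inv cc = x2 \<otimes> x1" using x1 x2 by (simp add: rel12 m_assoc)
  then show ?thesis by (simp add: int_pow_neg)
qed

lemma ccpow_add: "cc [^] (i::int) \<otimes> cc [^] j = cc [^] (i + j)"
  by (simp add: int_pow_mult)

lemma L1_step: "(x2 [^] (n+1) \<otimes> x1 = x1 \<otimes> x2 [^] (n+1) \<otimes> cc [^] (- Ssum m a2 (n+1))) \<longleftrightarrow>
                (x2 [^] n \<otimes> x1 = x1 \<otimes> x2 [^] n \<otimes> cc [^] (- Ssum m a2 n))"
proof -
  define Xp where "Xp = x2 [^] n"
  have Xp: "Xp \<in> carrier G" using x2 Xp_def by simp
  have e1: "x2 [^] (n+1) = x2 \<otimes> Xp" using int_pow_mult[OF x2, of 1 n] x2 Xp_def by (simp add: add.commute)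
  have "x1 \<otimes> x2 [^] (n+1) \<otimes> cc [^] (- Ssum m a2 (n+1)) = x1 \<otimes> x2 \<otimes> Xp \<otimes> cc [^] (- Ssum m a2 (n+1))"
    using x1 x2 Xp by (simp add: e1 m_assoc)
  also have "\<dots> = x2 \<otimes> x1 \<otimes> (cc [^] (1::int) \<otimes> Xp) \<otimes> cc [^] (- Ssum m a2 (n+1))"
    using x1 x2 Xp by (simp add: rel12 m_assoc)
  also have "\<dots> = x2 \<otimes> x1 \<otimes> (Xp \<otimes> cc [^] (1 * Pw m a2 n)) \<otimes> cc [^] (- Ssum m a2 (n+1))"
    using K2[of 1 n] Xp_def by simp
  also have "\<dots> = x2 \<otimes> (x1 \<otimes> Xp \<otimes> (cc [^] (Pw m a2 n) \<otimes> cc [^] (- Ssum m a2 (n+1))))"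
    using x1 x2 Xp by (simp add: m_assoc)
  also have "\<dots> = x2 \<otimes> (x1 \<otimes> Xp \<otimes> cc [^] (- Ssum m a2 n))"
    by (simp add: ccpow_add S_step)
  finally have B: "x1 \<otimes> x2 [^] (n+1) \<otimes> cc [^] (- Ssum m a2 (n+1)) = x2 \<otimes> (x1 \<otimes> Xp \<otimes> cc [^] (- Ssum m a2 n))" .
  have A: "x2 [^] (n+1) \<otimes> x1 = x2 \<otimes> (Xp \<otimes> x1)" using x1 x2 Xp by (simp add: e1 m_assoc)
  show ?thesis unfolding A B Xp_def[symmetric] using x1 x2 Xp by simp
qed

lemma L1: "x2 [^] (n::int) \<otimes> x1 = x1 \<otimes> x2 [^] n \<otimes> cc [^] (- Ssum m a2 n)"
proof (induction n rule: int_induct[where k=0])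
  case base then show ?case using x1 by simp
next
  case (step1 i) then show ?case using L1_step by blast
next
  case (step2 i) then show ?case using L1_step[of "i-1"] by simp
qed

lemma L2_step: "(x1 [^] (n+1) \<otimes> x2 = x2 \<otimes> x1 [^] (n+1) \<otimes> cc [^] (Ssum m a1 (n+1))) \<longleftrightarrow>
                (x1 [^] n \<otimes> x2 = x2 \<otimes> x1 [^] n \<otimes> cc [^] (Ssum m a1 n))"
proof -
  define Xp where "Xp = x1 [^] n"
  have Xp: "Xp \<in> carrier G" using x1 Xp_def by simp
  have e1: "x1 [^] (n+1) = x1 \<otimes> Xp" using int_pow_mult[OF x1, of 1 n] x1 Xp_def by (simp add: add.commute)
  have "x2 \<otimes> x1 [^] (n+1) \<otimes> cc [^] (Ssum m a1 (n+1)) = x2 \<otimes> x1 \<otimes> Xp \<otimes> cc [^] (Ssum m a1 (n+1))"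
    using x1 x2 Xp by (simp add: e1 m_assoc)
  also have "\<dots> = x1 \<otimes> x2 \<otimes> (cc [^] (-1::int) \<otimes> Xp) \<otimes> cc [^] (Ssum m a1 (n+1))"
    using x1 x2 Xp by (simp add: rel21 m_assoc)
  also have "\<dots> = x1 \<otimes> x2 \<otimes> (Xp \<otimes> cc [^] (-1 * Pw m a1 n)) \<otimes> cc [^] (Ssum m a1 (n+1))"
    using K1[of "-1" n] Xp_def by simp
  also have "\<dots> = x1 \<otimes> (x2 \<otimes> Xp \<otimes> (cc [^] (-1 * Pw m a1 n) \<otimes> cc [^] (Ssum m a1 (n+1))))"
    using x1 x2 Xp by (simp add: m_assoc)
  also have "\<dots> = x1 \<otimes> (x2 \<otimes> Xp \<otimes> cc [^] (Ssum m a1 n))"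
    by (simp add: ccpow_add S_step)
  finally have B: "x2 \<otimes> x1 [^] (n+1) \<otimes> cc [^] (Ssum m a1 (n+1)) = x1 \<otimes> (x2 \<otimes> Xp \<otimes> cc [^] (Ssum m a1 n))" .
  have A: "x1 [^] (n+1) \<otimes> x2 = x1 \<otimes> (Xp \<otimes> x2)" using x1 x2 Xp by (simp add: e1 m_assoc)
  show ?thesis unfolding A B Xp_def[symmetric] using x1 x2 Xp by simp
qed

lemma L2: "x1 [^] (n::int) \<otimes> x2 = x2 \<otimes> x1 [^] n \<otimes> cc [^] (Ssum m a1 n)"
proof (induction n rule: int_induct[where k=0])
  case base then show ?case using x2 by simp
next
  case (step1 i) then show ?case using L2_step by blast
next
  case (step2 i) then show ?case using L2_step[of "i-1"] by simp
qed


lemma E1: "x1 [^] (n1::int) \<otimes> x2 [^] (n2::int) \<otimes> cc [^] (nc::int) \<otimes> x1 =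
           x1 \<otimes> (x1 [^] n1 \<otimes> x2 [^] n2 \<otimes> cc [^] nc) \<longleftrightarrow>
           m dvd nc * (a1 - 1) - Ssum m a2 n2"
proof -
  define A where "A = x1 [^] n1"
  define B where "B = x2 [^] n2"
  have AB: "A \<in> carrier G" "B \<in> carrier G" using x1 x2 A_def B_def by auto
  have Cx: "cc [^] nc \<otimes> x1 = x1 \<otimes> cc [^] (nc * a1)"
    using K1[of nc 1] x1 by simp
  have Ax: "A \<otimes> x1 = x1 \<otimes> A"
  proof -
    have "A \<otimes> x1 [^] (1::int) = x1 [^] (n1 + 1)" using int_pow_mult[OF x1, of n1 1] A_def by simp
    also have "\<dots> = x1 [^] (1::int) \<otimes> A" using int_pow_mult[OF x1, of 1 n1] A_def by (simp add: add.commute)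
    finally show ?thesis using x1 by simp
  qed
  have "A \<otimes> B \<otimes> cc [^] nc \<otimes> x1 = A \<otimes> (B \<otimes> x1) \<otimes> cc [^] (nc * a1)"
    using AB x1 by (simp add: m_assoc Cx)
  also have "\<dots> = (A \<otimes> x1) \<otimes> B \<otimes> (cc [^] (- Ssum m a2 n2) \<otimes> cc [^] (nc * a1))"
    unfolding L1[of n2, folded B_def] using AB x1 by (simp add: m_assoc)
  also have "\<dots> = x1 \<otimes> (A \<otimes> (B \<otimes> cc [^] (- Ssum m a2 n2 + nc * a1)))"
    using AB x1 by (simp add: Ax m_assoc ccpow_add)
  finally have e: "A \<otimes> B \<otimes> cc [^] nc \<otimes> x1 = x1 \<otimes> (A \<otimes> (B \<otimes> cc [^] (- Ssum m a2 n2 + nc * a1)))" .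
  have "x1 \<otimes> (A \<otimes> B \<otimes> cc [^] nc) = x1 \<otimes> (A \<otimes> (B \<otimes> cc [^] nc))" using AB x1 by (simp add: m_assoc)
  then have "(A \<otimes> B \<otimes> cc [^] nc \<otimes> x1 = x1 \<otimes> (A \<otimes> B \<otimes> cc [^] nc)) \<longleftrightarrow>
      cc [^] (- Ssum m a2 n2 + nc * a1) = cc [^] nc"
    unfolding e using AB x1 by simp
  also have "\<dots> \<longleftrightarrow> m dvd nc * (a1 - 1) - Ssum m a2 n2"
    unfolding powc_eq by (simp add: algebra_simps)
  finally show ?thesis unfolding A_def B_def .
qed

lemma E2: "x1 [^] (n1::int) \<otimes> x2 [^] (n2::int) \<otimes> cc [^] (nc::int) \<otimes> x2 =
           x2 \<otimes> (x1 [^] n1 \<otimes> x2 [^] n2 \<otimes> cc [^] nc) \<longleftrightarrow>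
           m dvd Ssum m a1 n1 * Pw m a2 n2 + nc * (a2 - 1)"
proof -
  define A where "A = x1 [^] n1"
  define B where "B = x2 [^] n2"
  have AB: "A \<in> carrier G" "B \<in> carrier G" using x1 x2 A_def B_def by auto
  have Cx: "cc [^] nc \<otimes> x2 = x2 \<otimes> cc [^] (nc * a2)"
    using K2[of nc 1] x2 by simp
  have Bx: "B \<otimes> x2 = x2 \<otimes> B"
  proof -
    have "B \<otimes> x2 [^] (1::int) = x2 [^] (n2 + 1)" using int_pow_mult[OF x2, of n2 1] B_def by simp
    also have "\<dots> = x2 [^] (1::int) \<otimes> B" using int_pow_mult[OF x2, of 1 n2] B_def by (simp add: add.commute)
    finally show ?thesis using x2 by simp
  qed
  have "A \<otimes> B \<otimes> cc [^] nc \<otimes> x2 = (A \<otimes> x2) \<otimes> B \<otimes> cc [^] (nc * a2)"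
    using AB x2 by (simp add: m_assoc Cx Bx[symmetric])
  also have "\<dots> = x2 \<otimes> A \<otimes> (cc [^] (Ssum m a1 n1) \<otimes> B) \<otimes> cc [^] (nc * a2)"
    unfolding L2[of n1, folded A_def] using AB x2 by (simp add: m_assoc)
  also have "\<dots> = x2 \<otimes> A \<otimes> (B \<otimes> cc [^] (Ssum m a1 n1 * Pw m a2 n2)) \<otimes> cc [^] (nc * a2)"
    using K2 B_def by simp
  also have "\<dots> = x2 \<otimes> (A \<otimes> (B \<otimes> cc [^] (Ssum m a1 n1 * Pw m a2 n2 + nc * a2)))"
    using AB x2 by (simp add: m_assoc ccpow_add)
  finally have e: "A \<otimes> B \<otimes> cc [^] nc \<otimes> x2 = x2 \<otimes> (A \<otimes> (B \<otimes> cc [^] (Ssum m a1 n1 * Pw m a2 n2 + nc * a2)))" .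
  have "x2 \<otimes> (A \<otimes> B \<otimes> cc [^] nc) = x2 \<otimes> (A \<otimes> (B \<otimes> cc [^] nc))" using AB x2 by (simp add: m_assoc)
  then have "(A \<otimes> B \<otimes> cc [^] nc \<otimes> x2 = x2 \<otimes> (A \<otimes> B \<otimes> cc [^] nc)) \<longleftrightarrow>
      cc [^] (Ssum m a1 n1 * Pw m a2 n2 + nc * a2) = cc [^] nc"
    unfolding e using AB x2 by simp
  also have "\<dots> \<longleftrightarrow> m dvd Ssum m a1 n1 * Pw m a2 n2 + nc * (a2 - 1)"
    unfolding powc_eq by (simp add: algebra_simps)
  finally show ?thesis unfolding A_def B_def .
qed

lemma center_iff: "z \<in> carrier G \<Longrightarrow>
   z \<in> group_center G \<longleftrightarrow> (z \<otimes> x1 = x1 \<otimes> z \<and> z \<otimes> x2 = x2 \<otimes> z)"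
proof
  assume "z \<in> group_center G" then show "z \<otimes> x1 = x1 \<otimes> z \<and> z \<otimes> x2 = x2 \<otimes> z"
    using x1 x2 by (simp add: group_center_def)
next
  assume z: "z \<in> carrier G" and h: "z \<otimes> x1 = x1 \<otimes> z \<and> z \<otimes> x2 = x2 \<otimes> z"
  have "g \<in> generate G {x1, x2} \<Longrightarrow> z \<otimes> g = g \<otimes> z" for g
  proof (induction rule: generate.induct)
    case one then show ?case using z by simp
  next
    case (incl h') then show ?case using h by auto
  next
    case (inv h') then show ?case using h comm_inv[OF z] x1 x2 by auto
  next
    case (eng h1 h2)
    have c: "h1 \<in> carrier G" "h2 \<in> carrier G" using eng.hyps gen by auto
    have "z \<otimes> (h1 \<otimes> h2) = (z \<otimes> h1) \<otimes> h2" using c z by (simp add: m_assoc)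
    also have "\<dots> = h1 \<otimes> (z \<otimes> h2)" using c z eng.IH by (simp add: m_assoc)
    also have "\<dots> = h1 \<otimes> h2 \<otimes> z" using c z eng.IH by (simp add: m_assoc)
    finally show ?case .
  qed
  then show "z \<in> group_center G" using z gen by (auto simp: group_center_def)
qed

lemma main:
  "x1 [^] (n1::int) \<otimes> x2 [^] (n2::int) \<otimes> cc [^] (nc::int) \<in> group_center G \<longleftrightarrow>
   ([nc * (a1 - 1) = Ssum m a2 n2] (mod m) \<and> [nc * (a2 - 1) = Ssum m a1 (- n1)] (mod m))"
proof -
  have zc: "x1 [^] n1 \<otimes> x2 [^] n2 \<otimes> cc [^] nc \<in> carrier G" using x1 x2 by simp
  have e: "(x1 [^] n1 \<otimes> x2 [^] n2 \<otimes> cc [^] nc \<otimes> x1 = x1 \<otimes> (x1 [^] n1 \<otimes> x2 [^] n2 \<otimes> cc [^] nc)) =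
           (x1 \<otimes> (x1 [^] n1 \<otimes> x2 [^] n2 \<otimes> cc [^] nc) = x1 [^] n1 \<otimes> x2 [^] n2 \<otimes> cc [^] nc \<otimes> x1)"
    "(x1 [^] n1 \<otimes> x2 [^] n2 \<otimes> cc [^] nc \<otimes> x2 = x2 \<otimes> (x1 [^] n1 \<otimes> x2 [^] n2 \<otimes> cc [^] nc)) =
           (x2 \<otimes> (x1 [^] n1 \<otimes> x2 [^] n2 \<otimes> cc [^] nc) = x1 [^] n1 \<otimes> x2 [^] n2 \<otimes> cc [^] nc \<otimes> x2)"
    by auto
  show ?thesis
    unfolding center_iff[OF zc] E1 E2 cong_iff_dvd_diff
    using arith_final[OF c1 c2, of nc n2 n1] by auto
qed

end


theorem proposition14:
  fixes G :: "('a, 'b) monoid_scheme" and x1 x2 :: 'a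
    and m a1 a2 n1 n2 nc :: int
  assumes "m \<ge> 2" and "coprime a1 m" and "coprime a2 m"
    and "presentation G m a1 a2 x1 x2"
  shows "(x1 [^]\<^bsub>G\<^esub> n1 \<otimes>\<^bsub>G\<^esub> x2 [^]\<^bsub>G\<^esub> n2
            \<otimes>\<^bsub>G\<^esub> comm G x1 x2 [^]\<^bsub>G\<^esub> nc \<in> group_center G)
     \<longleftrightarrow> ([nc * (a1 - 1) = Ssum m a2 n2] (mod m) \<and>
          [nc * (a2 - 1) = Ssum m a1 (- n1)] (mod m))"
proof -
  note m2 = assms(1) and c1 = assms(2) and c2 = assms(3)
  have grp: "group G" and x1: "x1 \<in> carrier G" and x2: "x2 \<in> carrier G"
    and gen: "carrier G = generate G {x1, x2}" and rl: "rels G m a1 a2 x1 x2"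
    and univ: "\<And>(H :: int monoid) y1 y2. group H \<Longrightarrow> y1 \<in> carrier H \<Longrightarrow> y2 \<in> carrier H \<Longrightarrow>
        rels H m a1 a2 y1 y2 \<Longrightarrow> (\<exists>\<phi> \<in> hom G H. \<phi> x1 = y1 \<and> \<phi> x2 = y2)"
    using assms(4) unfolding presentation_def by blast+
  interpret G: group G by (rule grp)
  interpret H: group "Hm m a1 a2" by (rule Hm_group[OF m2 c1 c2])
  have y: "enc (1,0,0) \<in> carrier (Hm m a1 a2)" "enc (0,1,0) \<in> carrier (Hm m a1 a2)" using m2 by auto
  obtain \<phi> where phi: "\<phi> \<in> hom G (Hm m a1 a2)" "\<phi> x1 = enc (1,0,0)" "\<phi> x2 = enc (0,1,0)"
    using univ[OF H.is_group y relsH[OF m2 c1 c2]] by blast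
  interpret gh: group_hom G "Hm m a1 a2" \<phi>
    unfolding group_hom_def group_hom_axioms_def using grp H.is_group phi by blast
  have phic: "\<phi> (comm G x1 x2) = enc (0,0,1)"
    unfolding comm_def cH[OF m2 c1 c2, symmetric] using x1 x2 phi by simp
  have ordc: "m dvd k" if "comm G x1 x2 [^]\<^bsub>G\<^esub> (k::int) = \<one>\<^bsub>G\<^esub>" for k
  proof -
    have cc: "comm G x1 x2 \<in> carrier G" unfolding comm_def using x1 x2 by simp
    have "\<phi> (comm G x1 x2 [^]\<^bsub>G\<^esub> k) = \<one>\<^bsub>Hm m a1 a2\<^esub>" using that by simp
    then have "enc (0,0,1) [^]\<^bsub>Hm m a1 a2\<^esub> k = \<one>\<^bsub>Hm m a1 a2\<^esub>"
      using gh.hom_int_pow[OF cc, of k] phic by simp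
    then show ?thesis by (rule ordH[OF m2 c1 c2])
  qed
  interpret P: pres G x1 x2 m a1 a2
    by (unfold_locales) (use x1 x2 c1 c2 rl gen ordc in auto)
  show ?thesis by (rule P.main)
qed

end
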